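(* Let $M\ge 1$ be an integer, let $\alpha\ge 1$ be real, let $z$ be a real number with $|z|<2$, and let $p_1,\dots,p_M$ and $b_1,\dots,b_M$ be integers such that each $p_m$ is even and each $b_m$ is odd (i.e. $p_m\in 2\mathbb{Z}$ and $b_m-1\in 2\mathbb{Z}$). Define $$y = z + \alpha\sum_{m=1}^{M} p_m b_m .$$ Then $$z=\begin{cases} (y \bmod 4\alpha)-2\alpha, & \text{if } \tfrac12\sum_{m=1}^M p_m \text{ is odd},\\[2pt] \big((y+2\alpha) \bmod 4\alpha\big)-2\alpha, & \text{otherwise}.\end{cases}$$
   Context: For a real number $u$ and $a>0$, $u \bmod a$ denotes the unique element of $[0,a)$ congruent to $u$ modulo $a$, i.e. $u \bmod a = u - a\lfloor u/a\rfloor$. *)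

theory Defs
  imports Complex_Main
begin

definition rmod :: "real \<Rightarrow> real \<Rightarrow> real" (infixl "rmod" 70) where
  "u rmod a = u - a * of_int \<lfloor>u / a\<rfloor>"

end

theory Submission
  imports Defs
begin

lemma rmod_shift:
  fixes a x :: real and k :: int
  assumes "a > 0" "0 \<le> x" "x < a"
  shows "(x + a * of_int k) rmod a = x"
proof -
  have "(x + a * of_int k) / a = x / a + of_int k" using assms by (simp add: field_simps)
  moreover have "\<lfloor>x / a\<rfloor> = 0" using assms by (simp add: floor_eq_iff)
  ultimately have "\<lfloor>(x + a * of_int k) / a\<rfloor> = k" by simp
  thus ?thesis unfolding rmod_def by simp
qed

theorem mainTheorem1:
  fixes M :: nat and \<alpha> z :: real and p b :: "nat \<Rightarrow> int"
  assumes "M \<ge> 1" and "\<alpha> \<ge> 1" and "\<bar>z\<bar> < 2"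
    and "\<And>m. m \<in> {1..M} \<Longrightarrow> even (p m)"
    and "\<And>m. m \<in> {1..M} \<Longrightarrow> odd (b m)"
  shows "let y = z + \<alpha> * of_int (\<Sum>m=1..M. p m * b m) in
    z = (if odd ((\<Sum>m=1..M. p m) div 2)
         then (y rmod (4 * \<alpha>)) - 2 * \<alpha>
         else ((y + 2 * \<alpha>) rmod (4 * \<alpha>)) - 2 * \<alpha>)"
proof -
  define S where "S = (\<Sum>m=1..M. p m * b m)"
  define P where "P = (\<Sum>m=1..M. p m)"
  have d: "4 dvd (p m * b m - p m)" if hm: "m \<in> {1..M}" for m
  proof -
    obtain u where u: "p m = 2 * u" using assms(4)[OF hm] by blast
    obtain v where v: "b m = 2 * v + 1" using assms(5)[OF hm] oddE by blast
    have "p m * b m - p m = 4 * (u * v)" using u v by (simp add: algebra_simps)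
    thus ?thesis by simp
  qed
  have "S - P = (\<Sum>m=1..M. p m * b m - p m)" unfolding S_def P_def by (simp add: sum_subtractf)
  also have "4 dvd \<dots>" using d by (intro dvd_sum) auto
  finally obtain t where t: "S = P + 4 * t" by (metis add_diff_cancel_left' dvd_def diff_add_cancel add.commute)
  have "even P" unfolding P_def using assms(4) by (intro dvd_sum) auto
  then obtain q where q: "P = 2 * q" by blast
  have qd: "P div 2 = q" using q by simp
  have a0: "4 * \<alpha> > 0" using assms(2) by simp
  have z1: "0 \<le> z + 2 * \<alpha>" "z + 2 * \<alpha> < 4 * \<alpha>" using assms(2,3) by auto
  show ?thesis
  proof (cases "odd q")
    case True
    then obtain r where r: "q = 2 * r + 1" using oddE by blast
    have "z + \<alpha> * of_int S = (z + 2 * \<alpha>) + (4 * \<alpha>) * of_int (t + r)"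
      using t q r by (simp add: algebra_simps)
    hence "(z + \<alpha> * of_int S) rmod (4 * \<alpha>) = z + 2 * \<alpha>" using rmod_shift[OF a0 z1, of "t + r"] by (simp add: add.assoc)
    thus ?thesis using True unfolding S_def[symmetric] P_def[symmetric] qd
      by (simp add: Let_def)
  next
    case False
    then obtain r where r: "q = 2 * r" by blast
    have e: "z + \<alpha> * of_int S + 2 * \<alpha> = (z + 2 * \<alpha>) + (4 * \<alpha>) * of_int (t + r)"
      using t q r by (simp add: algebra_simps)
    have "(z + \<alpha> * of_int S + 2 * \<alpha>) rmod (4 * \<alpha>) = z + 2 * \<alpha>" unfolding e by (rule rmod_shift[OF a0 z1])
    thus ?thesis using False unfolding S_def[symmetric] P_def[symmetric] qd
      by (simp add: Let_def)
  qed
qed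

end
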